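(* There exist constants $0<a<b<+\infty$ such that, for the triangle Markov chain $(\mathcal T(n))_{n\in\mathbb N}$ obtained by iterated random barycentric subdivision from any initial triangle, with $J_n=J(\mathcal T(n))$, one has for all $n\in\mathbb N$ $$aJ_n\le J_{n+1}\le bJ_n .$$
   Context: A triangle is given by three points of the plane which are not all equal. Barycentric subdivision: if a triangle has vertices $A,B,C$, let $D,E,F$ be the midpoints of $[A,B],[B,C],[C,A]$ and $G$ its barycenter; the medians cut it into the six triangles $\{A,D,G\},\{D,B,G\},\{B,E,G\},\{E,C,G\},\{C,F,G\},\{F,A,G\}$. The triangle Markov chain: $\mathcal T(0)$ is given and $\mathcal T(n+1)$ is chosen uniformly among the six triangles of the barycentric subdivision of $\mathcal T(n)$, independently of the past. For a triangle $\mathcal T$, $J(\mathcal T)\in(0,+\infty]$ is the sum of the squares of the lengths of its edges divided by its area ($J=+\infty$ for zero-area triangles, with the convention $c\cdot(+\infty)=+\infty$ for $c>0$). *)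

theory Defs
  imports "HOL-Analysis.Analysis"
begin

type_synonym triangle = "complex \<times> complex \<times> complex"

definition nondeg_points :: "triangle \<Rightarrow> bool" where
  "nondeg_points T = (case T of (A, B, C) \<Rightarrow> \<not> (A = B \<and> B = C))"

definition tri_area :: "triangle \<Rightarrow> real" where
  "tri_area T = (case T of (A, B, C) \<Rightarrow> \<bar>Im ((B - A) * cnj (C - A))\<bar> / 2)"

definition edge_sq_sum :: "triangle \<Rightarrow> real" where
  "edge_sq_sum T = (case T of (A, B, C) \<Rightarrow> (cmod (A - B))\<^sup>2 + (cmod (B - C))\<^sup>2 + (cmod (C - A))\<^sup>2)"

definition J :: "triangle \<Rightarrow> ereal" where
  "J T = (if tri_area T = 0 then \<infinity> else ereal (edge_sq_sum T / tri_area T))"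

definition bary_subdiv :: "triangle \<Rightarrow> triangle list" where
  "bary_subdiv T = (case T of (A, B, C) \<Rightarrow>
     (let D = (A + B) / 2; E = (B + C) / 2; F = (C + A) / 2; G = (A + B + C) / 3 in
      [(A, D, G), (D, B, G), (B, E, G), (E, C, G), (C, F, G), (F, A, G)]))"

text \<open>A trajectory of the triangle Markov chain: each step is one of the six
  subdivision triangles of the previous one.\<close>
definition chain_path :: "(nat \<Rightarrow> triangle) \<Rightarrow> bool" where
  "chain_path T = (nondeg_points (T 0) \<and> (\<forall>n. T (Suc n) \<in> set (bary_subdiv (T n))))"

end

theory Submission
  imports Defs
begin

lemma sq_add_le: "(cmod (a + b))\<^sup>2 \<le> 2 * (cmod a)\<^sup>2 + 2 * (cmod b)\<^sup>2"
proof -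
  have "cmod (a+b) \<le> cmod a + cmod b" by (rule norm_triangle_ineq)
  hence "(cmod (a+b))\<^sup>2 \<le> (cmod a + cmod b)\<^sup>2"
    by (simp add: power_mono)
  also have "\<dots> \<le> 2 * (cmod a)\<^sup>2 + 2 * (cmod b)\<^sup>2"
    using sum_squares_ge_zero[of "cmod a - cmod b" 0]
    by (simp add: power2_eq_square algebra_simps)
  finally show ?thesis .
qed

lemma sq_scale: "(cmod (c * z))\<^sup>2 = (cmod c)\<^sup>2 * (cmod z)\<^sup>2"
  by (simp add: norm_mult power_mult_distrib)

lemma core:
  fixes P Q R :: complex
  defines "M \<equiv> (P + Q) / 2" and "G \<equiv> (P + Q + R) / 3"
  defines "S \<equiv> (cmod (P - Q))\<^sup>2 + (cmod (Q - R))\<^sup>2 + (cmod (R - P))\<^sup>2"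
  defines "S' \<equiv> (cmod (P - M))\<^sup>2 + (cmod (M - G))\<^sup>2 + (cmod (G - P))\<^sup>2"
  shows "S \<le> 60 * S' \<and> S' \<le> S"
proof -
  define e1 where "e1 = P - M"
  define e3 where "e3 = G - P"
  have "P - Q = 2 * e1" unfolding e1_def M_def by (simp add: field_simps)
  hence a1: "(cmod (P - Q))\<^sup>2 = 4 * (cmod e1)\<^sup>2" by (simp add: sq_scale)
  have "R - P = 3 * e3 + 2 * e1" unfolding e1_def e3_def M_def G_def by (simp add: field_simps)
  hence a2: "(cmod (R - P))\<^sup>2 \<le> 2 * (9 * (cmod e3)\<^sup>2) + 2 * (4 * (cmod e1)\<^sup>2)"
    using sq_add_le[of "3*e3" "2*e1"] by (simp add: sq_scale)
  have "Q - R = (-4) * e1 + (-3) * e3" unfolding e1_def e3_def M_def G_def by (simp add: field_simps)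
  hence a3: "(cmod (Q - R))\<^sup>2 \<le> 2 * (16 * (cmod e1)\<^sup>2) + 2 * (9 * (cmod e3)\<^sup>2)"
    using sq_add_le[of "(-4)*e1" "(-3)*e3"] by (simp add: sq_scale)
  have low: "S \<le> 60 * S'" unfolding S_def S'_def using a1 a2 a3
    unfolding e1_def e3_def by (smt (verit) zero_le_power2)
  have b1: "(cmod (P - M))\<^sup>2 = (cmod (P - Q))\<^sup>2 / 4"
    using a1 unfolding e1_def by simp
  have "M - G = (1/6) * ((P - R) + (Q - R))" unfolding M_def G_def by (simp add: field_simps)
  hence "(cmod (M - G))\<^sup>2 = (cmod ((P - R) + (Q - R)))\<^sup>2 / 36"
    by (simp only: sq_scale) (simp add: power2_eq_square)
  hence b2: "(cmod (M - G))\<^sup>2 \<le> (2 * (cmod (R - P))\<^sup>2 + 2 * (cmod (Q - R))\<^sup>2) / 36"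
    using sq_add_le[of "P - R" "Q - R"] by (simp add: norm_minus_commute)
  have "G - P = (1/3) * ((Q - P) + (R - P))" unfolding G_def by (simp add: field_simps)
  hence "(cmod (G - P))\<^sup>2 = (cmod ((Q - P) + (R - P)))\<^sup>2 / 9"
    by (simp only: sq_scale) (simp add: power2_eq_square)
  hence b3: "(cmod (G - P))\<^sup>2 \<le> (2 * (cmod (P - Q))\<^sup>2 + 2 * (cmod (R - P))\<^sup>2) / 9"
    using sq_add_le[of "Q - P" "R - P"] by (simp add: norm_minus_commute)
  have c1: "4 * (cmod (P - M))\<^sup>2 = (cmod (P - Q))\<^sup>2" using b1 by simp
  have c2: "36 * (cmod (M - G))\<^sup>2 \<le> 2 * (cmod (Q - R))\<^sup>2 + 2 * (cmod (R - P))\<^sup>2" using b2 by simp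
  have c3: "9 * (cmod (G - P))\<^sup>2 \<le> 2 * (cmod (P - Q))\<^sup>2 + 2 * (cmod (R - P))\<^sup>2" using b3 by simp
  have "S' \<le> S" unfolding S_def S'_def using c1 c2 c3
      zero_le_power2[of "cmod (P-Q)"] zero_le_power2[of "cmod (Q-R)"] zero_le_power2[of "cmod (R-P)"]
    by linarith
  with low show ?thesis by simp
qed

lemma area_sub:
  fixes A B C :: complex
  shows "T' \<in> set (bary_subdiv (A,B,C)) \<Longrightarrow> tri_area T' = tri_area (A,B,C) / 6"
proof -
  have h: "\<And>x y::real. 6 * x = y \<or> 6 * x = - y \<Longrightarrow> 6 * \<bar>x\<bar> = \<bar>y\<bar>" by auto
  assume "T' \<in> set (bary_subdiv (A,B,C))"
  then show ?thesis
  unfolding bary_subdiv_def tri_area_def Let_def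
  apply (auto simp: algebra_simps)
  by (rule h, simp add: field_simps algebra_simps)+
qed

lemma es_sub:
  fixes A B C :: complex
  shows "T' \<in> set (bary_subdiv (A,B,C)) \<Longrightarrow> edge_sq_sum (A,B,C) \<le> 60 * edge_sq_sum T' \<and> edge_sq_sum T' \<le> edge_sq_sum (A,B,C)"
  unfolding bary_subdiv_def Let_def
  using core[of A B C] core[of B A C] core[of B C A] core[of C B A] core[of C A B] core[of A C B]
  by (auto simp: edge_sq_sum_def add_ac norm_minus_commute)

lemma tri_area_nonneg: "tri_area T \<ge> 0"
  by (cases T) (auto simp: tri_area_def)

lemma J_step:
  assumes "T' \<in> set (bary_subdiv T)"
  shows "ereal (1/10) * J T \<le> J T' \<and> J T' \<le> ereal 6 * J T"
proof -
  obtain A B C where T: "T = (A,B,C)" by (cases T) auto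
  have ar: "tri_area T' = tri_area T / 6" using area_sub assms T by blast
  have es: "edge_sq_sum T \<le> 60 * edge_sq_sum T'" "edge_sq_sum T' \<le> edge_sq_sum T"
    using es_sub assms T by blast+
  show ?thesis
  proof (cases "tri_area T = 0")
    case True
    then show ?thesis using ar by (simp add: J_def)
  next
    case False
    with tri_area_nonneg[of T] have pos: "tri_area T > 0" by simp
    have JT: "J T = ereal (edge_sq_sum T / tri_area T)" using False by (simp add: J_def)
    have JT': "J T' = ereal (edge_sq_sum T' / (tri_area T / 6))" unfolding J_def ar using False by simp
    have 1: "1/10 * (edge_sq_sum T / tri_area T) \<le> edge_sq_sum T' / (tri_area T / 6)"
      using es pos by (simp add: field_simps)
    have 2: "edge_sq_sum T' / (tri_area T / 6) \<le> 6 * (edge_sq_sum T / tri_area T)"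
      using es pos by (simp add: field_simps)
    show ?thesis using 1 2 unfolding JT JT' by simp
  qed
qed

theorem lemma6:
  shows "\<exists>a b :: real. 0 < a \<and> a < b \<and>
    (\<forall>T :: nat \<Rightarrow> triangle. chain_path T \<longrightarrow>
       (\<forall>n. ereal a * J (T n) \<le> J (T (Suc n)) \<and> J (T (Suc n)) \<le> ereal b * J (T n)))"
  apply (rule exI[of _ "1/10"], rule exI[of _ 6])
  using J_step unfolding chain_path_def by auto

end
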